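(* Let $\alpha\geqslant1$, $N_1\in2^{\mathbb{N}_0}$, $N_2\in2^{\mathbb{Z}}$ with $N_1\gg N_2$, and $L_1,L_2\in2^{\mathbb{N}_0}$. For $i=1,2$ let $f_{i,N_i,L_i}:\mathbb{R}\times\mathbb{R}^2\to\mathbb{R}_{\geqslant0}$ with $\mathrm{supp}(f_{i,N_i,L_i})\subseteq D_{N_i,L_i}$. Then $$\|f_{1,N_1,L_1}*f_{2,N_2,L_2}\|_{L^2_{\tau,\xi,\eta}}\lesssim\frac{N_2^{\frac12}}{N_1^{\frac{\alpha}{4}}}\prod_{i=1}^2L_i^{\frac12}\|f_{i,N_i,L_i}\|_{L^2}.$$
   Context: $\omega_\alpha(\xi,\eta)=\xi|\xi|^\alpha+\frac{\eta^2}{\xi}$; $A_N=\{\xi\in\mathbb{R}:N/4\leqslant|\xi|\leqslant4N\}$; $D_{N,L}=\{(\tau,\xi,\eta)\in\mathbb{R}^3:\xi\in A_N,\ |\tau-\omega_\alpha(\xi,\eta)|\leqslant L\}$. Convolution is in $(\tau,\xi,\eta)\in\mathbb{R}^3$ with Lebesgue measure. *)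

theory Defs
  imports "HOL-Analysis.Analysis"
begin

definition omega :: "real \<Rightarrow> real \<Rightarrow> real \<Rightarrow> real" where
  "omega \<alpha> \<xi> \<eta> = \<xi> * \<bar>\<xi>\<bar> powr \<alpha> + \<eta>\<^sup>2 / \<xi>"

definition annulus :: "real \<Rightarrow> real set" where
  "annulus N = {\<xi>. N / 4 \<le> \<bar>\<xi>\<bar> \<and> \<bar>\<xi>\<bar> \<le> 4 * N}"

definition Dset :: "real \<Rightarrow> real \<Rightarrow> real \<Rightarrow> (real \<times> real \<times> real) set" where
  "Dset \<alpha> N L = {(\<tau>, \<xi>, \<eta>). \<xi> \<in> annulus N \<and> \<bar>\<tau> - omega \<alpha> \<xi> \<eta>\<bar> \<le> L}"

definition conv3 :: "(real \<times> real \<times> real \<Rightarrow> real) \<Rightarrow> (real \<times> real \<times> real \<Rightarrow> real)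
    \<Rightarrow> real \<times> real \<times> real \<Rightarrow> ennreal" where
  "conv3 f g x = (\<integral>\<^sup>+ y. ennreal (f y) * ennreal (g (x - y)) \<partial>lborel)"

definition L2sq :: "(real \<times> real \<times> real \<Rightarrow> real) \<Rightarrow> ennreal" where
  "L2sq f = (\<integral>\<^sup>+ x. ennreal ((f x)\<^sup>2) \<partial>lborel)"

end

theory Submission
  imports Defs
begin

lemma conv_CS:
  fixes f1 f2 :: "real \<times> real \<times> real \<Rightarrow> real" and c :: ennreal
  assumes m1[measurable]: "f1 \<in> borel_measurable lborel" and m2[measurable]: "f2 \<in> borel_measurable lborel"
    and p1: "\<And>x. f1 x \<ge> 0" and p2: "\<And>x. f2 x \<ge> 0"
    and bnd: "\<And>x. emeasure lborel {y. f1 y \<noteq> 0 \<and> f2 (x - y) \<noteq> 0} \<le> c"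
  shows "(\<integral>\<^sup>+ x. (conv3 f1 f2 x)\<^sup>2 \<partial>lborel) \<le> c * L2sq f1 * L2sq f2"
proof -
  have m1b[measurable]: "f1 \<in> borel_measurable borel" using m1 by simp
  have m2b[measurable]: "f2 \<in> borel_measurable borel" using m2 by simp
  define E where "E x = {y. f1 y \<noteq> 0 \<and> f2 (x - y) \<noteq> 0}" for x
  have Em: "E x \<in> sets lborel" for x unfolding E_def by measurable
  have pt: "(conv3 f1 f2 x)\<^sup>2 \<le> c * (\<integral>\<^sup>+ y. ennreal ((f1 y)\<^sup>2) * ennreal ((f2 (x - y))\<^sup>2) \<partial>lborel)" for x
  proof -
    have "conv3 f1 f2 x = (\<integral>\<^sup>+ y. (ennreal (f1 y) * ennreal (f2 (x - y))) * indicator (E x) y \<partial>lborel)"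
      unfolding conv3_def by (intro nn_integral_cong) (auto simp: E_def indicator_def)
    also have "(\<dots>)\<^sup>2 \<le> (\<integral>\<^sup>+ y. (ennreal (f1 y) * ennreal (f2 (x - y)))\<^sup>2 \<partial>lborel) * (\<integral>\<^sup>+ y. (indicator (E x) y :: ennreal)\<^sup>2 \<partial>lborel)"
      by (rule Cauchy_Schwarz_nn_integral) (use Em in auto)
    also have "(\<integral>\<^sup>+ y. (indicator (E x) y :: ennreal)\<^sup>2 \<partial>lborel) = emeasure lborel (E x)"
    proof -
      have "(\<lambda>y. (indicator (E x) y :: ennreal)\<^sup>2) = indicator (E x)" by (auto simp: indicator_def fun_eq_iff)
      then show ?thesis using Em by simp
    qed
    also have "\<dots> \<le> c" using bnd unfolding E_def .
    also have "(\<integral>\<^sup>+ y. (ennreal (f1 y) * ennreal (f2 (x - y)))\<^sup>2 \<partial>lborel) = (\<integral>\<^sup>+ y. ennreal ((f1 y)\<^sup>2) * ennreal ((f2 (x - y))\<^sup>2) \<partial>lborel)"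
      by (intro nn_integral_cong) (simp add: power_mult_distrib ennreal_power p1 p2)
    finally show ?thesis by (simp add: mult.commute mult_right_mono)
  qed
  have "(\<integral>\<^sup>+ x. (conv3 f1 f2 x)\<^sup>2 \<partial>lborel) \<le> (\<integral>\<^sup>+ x. c * (\<integral>\<^sup>+ y. ennreal ((f1 y)\<^sup>2) * ennreal ((f2 (x - y))\<^sup>2) \<partial>lborel) \<partial>lborel)"
    by (intro nn_integral_mono pt)
  also have "\<dots> = c * (\<integral>\<^sup>+ x. (\<integral>\<^sup>+ y. ennreal ((f1 y)\<^sup>2) * ennreal ((f2 (x - y))\<^sup>2) \<partial>lborel) \<partial>lborel)"
    by (rule nn_integral_cmult) measurable
  also have "(\<integral>\<^sup>+ x. (\<integral>\<^sup>+ y. ennreal ((f1 y)\<^sup>2) * ennreal ((f2 (x - y))\<^sup>2) \<partial>lborel) \<partial>lborel)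
      = (\<integral>\<^sup>+ y. (\<integral>\<^sup>+ x. ennreal ((f1 y)\<^sup>2) * ennreal ((f2 (x - y))\<^sup>2) \<partial>lborel) \<partial>lborel)"
    by (rule lborel_pair.Fubini'[symmetric]) measurable
  also have "\<dots> = (\<integral>\<^sup>+ y. ennreal ((f1 y)\<^sup>2) * L2sq f2 \<partial>lborel)"
  proof (intro nn_integral_cong)
    fix y :: "real \<times> real \<times> real"
    have "(\<integral>\<^sup>+ x. ennreal ((f2 (x - y))\<^sup>2) \<partial>lborel) = (\<integral>\<^sup>+ x. ennreal ((f2 x)\<^sup>2) \<partial>distr lborel borel ((+) (-y)))"
      by (subst nn_integral_distr) (auto simp: algebra_simps)
    also have "\<dots> = L2sq f2" unfolding L2sq_def lborel_distr_plus ..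
    finally show "(\<integral>\<^sup>+ x. ennreal ((f1 y)\<^sup>2) * ennreal ((f2 (x - y))\<^sup>2) \<partial>lborel) = ennreal ((f1 y)\<^sup>2) * L2sq f2"
      by (subst nn_integral_cmult) auto
  qed
  also have "\<dots> = L2sq f1 * L2sq f2"
    unfolding L2sq_def[of f1] by (rule nn_integral_multc) measurable
  finally show ?thesis by (simp add: mult.assoc)
qed

lemma deriv_spow:
  fixes a s :: real assumes "s \<noteq> 0"
  shows "((\<lambda>s. s * \<bar>s\<bar> powr a) has_real_derivative (a+1) * \<bar>s\<bar> powr a) (at s)"
proof (cases "s > 0")
  case True
  have d1: "((\<lambda>s. s powr a) has_real_derivative (s powr a) * (0 * ln s + 1 * a / s)) (at s)"
    by (rule DERIV_powr) (use True in \<open>auto intro!: derivative_eq_intros\<close>)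
  have "((\<lambda>s. s * s powr a) has_real_derivative 1 * s powr a + s * ((s powr a) * (0 * ln s + 1 * a / s))) (at s)"
    using DERIV_mult[OF DERIV_ident d1] by (simp add: mult.commute)
  moreover have "1 * s powr a + s * ((s powr a) * (0 * ln s + 1 * a / s)) = (a+1) * \<bar>s\<bar> powr a"
    using True by (auto simp: field_simps)
  ultimately have "((\<lambda>s. s * s powr a) has_real_derivative (a+1) * \<bar>s\<bar> powr a) (at s)" by simp
  then show ?thesis
    by (rule has_field_derivative_transform_within_open[where S="{0<..}"]) (use True in auto)
next
  case False
  then have neg: "s < 0" using assms by auto
  have d1: "((\<lambda>s. (-s) powr a) has_real_derivative ((-s) powr a) * (0 * ln (-s) + (-1) * a / (-s))) (at s)"
    by (rule DERIV_powr) (use neg in \<open>auto intro!: derivative_eq_intros\<close>)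
  have "((\<lambda>s. s * (-s) powr a) has_real_derivative 1 * (-s) powr a + s * (((-s) powr a) * (0 * ln (-s) + (-1) * a / (-s)))) (at s)"
    using DERIV_mult[OF DERIV_ident d1] by (simp add: mult.commute)
  moreover have "1 * (-s) powr a + s * (((-s) powr a) * (0 * ln (-s) + (-1) * a / (-s))) = (a+1) * \<bar>s\<bar> powr a"
    using neg by (auto simp: field_simps)
  ultimately have "((\<lambda>s. s * (-s) powr a) has_real_derivative (a+1) * \<bar>s\<bar> powr a) (at s)" by simp
  then show ?thesis
    by (rule has_field_derivative_transform_within_open[where S="{..<0}"]) (use neg in auto)
qed

lemma diam_lemma:
  fixes P :: "real set" assumes "r \<ge> 0" "\<And>a b. a \<in> P \<Longrightarrow> b \<in> P \<Longrightarrow> \<bar>a - b\<bar> \<le> r"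
  shows "\<exists>I\<in>sets lborel. P \<subseteq> I \<and> emeasure lborel I \<le> ennreal (2*r)"
proof (cases "P = {}")
  case True then show ?thesis by (intro bexI[of _ "{}"]) auto
next
  case False
  then obtain a0 where a0: "a0 \<in> P" by auto
  show ?thesis
  proof (intro bexI[of _ "{a0 - r..a0 + r}"] conjI)
    show "P \<subseteq> {a0 - r..a0 + r}" using assms(2)[OF a0] by (force simp: abs_le_iff)
    show "emeasure lborel {a0 - r..a0 + r} \<le> ennreal (2 * r)" using assms(1) by simp
  qed auto
qed

lemma arctan_int:
  fixes A B :: real assumes A: "A > 0" and B: "B > 0"
  shows "(\<integral>\<^sup>+u. ennreal (1/(A + B*u\<^sup>2)) \<partial>lborel) \<le> ennreal (pi / sqrt (A*B))"
proof -
  define g where "g u = 1/(A + B*u\<^sup>2)" for u :: real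
  define F where "F u = arctan (u * sqrt (B/A)) / sqrt (A*B)" for u :: real
  have gm[measurable]: "g \<in> borel_measurable borel" unfolding g_def by measurable
  have pos: "A + B*u\<^sup>2 > 0" for u using A B by (simp add: add_pos_nonneg)
  have dF: "DERIV F u :> g u" for u
  proof -
    have "DERIV F u :> (inverse (1 + (u * sqrt (B/A))\<^sup>2) * (1 * sqrt (B/A))) / sqrt (A*B)"
      unfolding F_def
      by (rule DERIV_cdivide[OF DERIV_chain2[OF DERIV_arctan DERIV_cmult_right[OF DERIV_ident]]])
    moreover have "(inverse (1 + (u * sqrt (B/A))\<^sup>2) * (1 * sqrt (B/A))) / sqrt (A*B) = g u"
    proof -
      have s1: "sqrt (B/A) / sqrt (A*B) = 1/A" using A B
        by (simp add: real_sqrt_divide real_sqrt_mult field_simps)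
      have s2: "(u * sqrt (B/A))\<^sup>2 = u\<^sup>2 * B / A" using A B by (simp add: power_mult_distrib)
      have "inverse (1 + (u * sqrt (B/A))\<^sup>2) * (1 * sqrt (B/A)) / sqrt (A*B) = inverse (1 + u\<^sup>2 * B / A) * (1/A)"
        using s1 s2 by (simp add: times_divide_eq_right[symmetric] del: times_divide_eq_right)
      also have "\<dots> = 1 / (A + B*u\<^sup>2)" using A by (simp add: field_simps)
      finally show ?thesis unfolding g_def .
    qed
    ultimately show ?thesis by simp
  qed
  have lim: "(F \<longlongrightarrow> (pi/2) / sqrt (A*B)) at_top"
    unfolding F_def
    by (intro tendsto_divide tendsto_const filterlim_compose[OF tendsto_arctan_at_top]
          filterlim_at_top_mult_tendsto_pos[OF tendsto_const] filterlim_ident) (use A B in auto)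
  have half: "(\<integral>\<^sup>+u. ennreal (g u) * indicator {0..} u \<partial>lborel) = ennreal ((pi/2) / sqrt (A*B) - F 0)"
    by (rule nn_integral_FTC_atLeast[OF gm dF _ lim]) (use pos in \<open>auto simp: g_def less_imp_le\<close>)
  have F0: "F 0 = 0" unfolding F_def by simp
  have neg: "(\<integral>\<^sup>+u. ennreal (g u) * indicator {..0} u \<partial>lborel) = (\<integral>\<^sup>+u. ennreal (g u) * indicator {0..} u \<partial>lborel)"
    by (subst nn_integral_real_affine[where c="-1" and t=0]) (auto simp: g_def indicator_def)
  have "(\<integral>\<^sup>+u. ennreal (1/(A + B*u\<^sup>2)) \<partial>lborel) \<le> (\<integral>\<^sup>+u. ennreal (g u) * indicator {0..} u + ennreal (g u) * indicator {..0} u \<partial>lborel)"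
    by (intro nn_integral_mono) (auto simp: g_def indicator_def)
  also have "\<dots> = (\<integral>\<^sup>+u. ennreal (g u) * indicator {0..} u \<partial>lborel) + (\<integral>\<^sup>+u. ennreal (g u) * indicator {..0} u \<partial>lborel)"
    by (rule nn_integral_add) auto
  also have "\<dots> = ennreal (pi / sqrt (A*B))"
    unfolding neg half F0 using A B by (simp flip: ennreal_plus)
  finally show ?thesis .
qed

definition phi :: "real \<Rightarrow> real \<Rightarrow> real \<Rightarrow> real \<Rightarrow> real" where
  "phi \<alpha> \<xi> u s = s * \<bar>s\<bar> powr \<alpha> + (\<xi> - s) * \<bar>\<xi> - s\<bar> powr \<alpha> + u\<^sup>2 * (inverse s + inverse (\<xi> - s))"

lemma deriv_phi:
  assumes "s \<noteq> 0" "\<xi> - s \<noteq> 0"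
  shows "DERIV (phi \<alpha> \<xi> u) s :> (\<alpha>+1) * \<bar>s\<bar> powr \<alpha> - (\<alpha>+1) * \<bar>\<xi> - s\<bar> powr \<alpha> + u\<^sup>2 * (inverse (\<xi> - s) ^ 2 - inverse s ^ 2)"
proof -
  have d1: "DERIV (\<lambda>s. s * \<bar>s\<bar> powr \<alpha>) s :> (\<alpha>+1) * \<bar>s\<bar> powr \<alpha>" using deriv_spow assms by blast
  have d2: "DERIV (\<lambda>s. (\<xi> - s) * \<bar>\<xi> - s\<bar> powr \<alpha>) s :> (\<alpha>+1) * \<bar>\<xi> - s\<bar> powr \<alpha> * (0 - 1)"
    using DERIV_chain2[where f="\<lambda>y. y * \<bar>y\<bar> powr \<alpha>" and g="\<lambda>y. \<xi> - y", OF deriv_spow[OF assms(2), of \<alpha>] DERIV_diff[OF DERIV_const DERIV_ident]]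
    by simp
  have d3: "DERIV (\<lambda>s. inverse s) s :> - (inverse s ^ 2)"
    using DERIV_inverse[of s] assms by (simp add: power2_eq_square)
  have d4: "DERIV (\<lambda>s. inverse (\<xi> - s)) s :> - (inverse (\<xi> - s) ^ 2) * (0 - 1)"
    using DERIV_chain2[where f=inverse and g="\<lambda>y. \<xi> - y", OF DERIV_inverse[of "\<xi> - s"] DERIV_diff[OF DERIV_const DERIV_ident]]
       assms by (simp add: power2_eq_square)
  have "DERIV (phi \<alpha> \<xi> u) s :> (\<alpha>+1) * \<bar>s\<bar> powr \<alpha> + (\<alpha>+1) * \<bar>\<xi> - s\<bar> powr \<alpha> * (0 - 1) + u\<^sup>2 * (- (inverse s ^ 2) + - (inverse (\<xi> - s) ^ 2) * (0 - 1))"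
    unfolding phi_def[abs_def]
    by (intro DERIV_add d1 d2 DERIV_cmult d3 d4)
  then show ?thesis by (simp add: algebra_simps)
qed

definition piece :: "real \<Rightarrow> real \<Rightarrow> real \<Rightarrow> real \<Rightarrow> real \<Rightarrow> real set" where
  "piece N1 N2 \<xi> \<sigma>1 \<sigma>2 = {s. N1/4 \<le> \<sigma>1 * s \<and> \<sigma>1 * s \<le> 4*N1 \<and> N2/4 \<le> \<sigma>2 * (\<xi>-s) \<and> \<sigma>2 * (\<xi>-s) \<le> 4*N2}"

lemma inv_bound:
  fixes d T N2 :: real
  assumes "0 < d" "d \<le> 4*N2" "2*d \<le> T"
  shows "3/(64*N2\<^sup>2) \<le> inverse d ^ 2 - inverse T ^ 2"
proof -
  have "inverse T ^ 2 \<le> inverse (2*d) ^ 2"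
    using assms by (intro power_mono le_imp_inverse_le) auto
  moreover have "inverse (2*d) ^ 2 = inverse d ^ 2 / 4" by (simp add: power_mult_distrib field_simps)
  moreover have "inverse (4*N2) ^ 2 \<le> inverse d ^ 2"
    using assms by (intro power_mono le_imp_inverse_le) auto
  moreover have "inverse (4*N2) ^ 2 = 1/(16*N2\<^sup>2)" by (simp add: power_mult_distrib field_simps)
  moreover have "3/(64*N2\<^sup>2) = 3/4 * (1/(16*N2\<^sup>2))" by simp
  ultimately show ?thesis by linarith
qed

lemma deriv_lower:
  fixes \<alpha> N1 N2 \<xi> u t :: real
  assumes \<alpha>: "\<alpha> \<ge> 1" and N2: "N2 > 0" and N12: "32*N2 \<le> N1"
    and \<sigma>: "\<sigma>1 \<in> {-1,1}" "\<sigma>2 \<in> {-1,1}" and t: "t \<in> piece N1 N2 \<xi> \<sigma>1 \<sigma>2"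
  shows "t \<noteq> 0" "\<xi> - t \<noteq> 0"
    "(N1/4) powr \<alpha> / 2 + 3/(64*N2\<^sup>2) * u\<^sup>2 \<le> (\<alpha>+1) * \<bar>t\<bar> powr \<alpha> - (\<alpha>+1) * \<bar>\<xi> - t\<bar> powr \<alpha> + u\<^sup>2 * (inverse (\<xi> - t) ^ 2 - inverse t ^ 2)"
proof -
  have abs1: "\<bar>\<sigma>1 * x\<bar> = \<bar>x\<bar>" "\<bar>\<sigma>2 * x\<bar> = \<bar>x\<bar>" for x using \<sigma> by auto
  have T: "N1/4 \<le> \<bar>t\<bar>" using t abs1(1)[of t] unfolding piece_def by auto
  have d1: "N2/4 \<le> \<bar>\<xi> - t\<bar>" and d2: "\<bar>\<xi> - t\<bar> \<le> 4*N2"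
    using t abs1(2)[of "\<xi> - t"] \<sigma>(2) unfolding piece_def by auto
  show "t \<noteq> 0" using T N2 N12 by auto
  show "\<xi> - t \<noteq> 0" using d1 N2 by auto
  have half: "\<bar>\<xi> - t\<bar> \<le> \<bar>t\<bar>/2" using d2 T N12 by linarith
  have "\<bar>\<xi> - t\<bar> powr \<alpha> \<le> (\<bar>t\<bar>/2) powr \<alpha>" using half \<alpha> by (intro powr_mono2) auto
  also have "\<dots> = \<bar>t\<bar> powr \<alpha> / 2 powr \<alpha>" by (simp add: powr_divide)
  also have "\<dots> \<le> \<bar>t\<bar> powr \<alpha> / 2"
  proof -
    have "2 powr 1 \<le> 2 powr \<alpha>" using \<alpha> by (intro powr_mono) auto
    then show ?thesis by (intro divide_left_mono) auto
  qed
  finally have p1: "\<bar>\<xi> - t\<bar> powr \<alpha> \<le> \<bar>t\<bar> powr \<alpha> / 2" .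
  have p2: "(N1/4) powr \<alpha> \<le> \<bar>t\<bar> powr \<alpha>" using T N2 N12 \<alpha> by (intro powr_mono2) auto
  have p3: "(N1/4) powr \<alpha> / 2 \<le> (\<alpha>+1) * \<bar>t\<bar> powr \<alpha> - (\<alpha>+1) * \<bar>\<xi> - t\<bar> powr \<alpha>"
  proof -
    define \<Delta> where "\<Delta> = \<bar>t\<bar> powr \<alpha> - \<bar>\<xi> - t\<bar> powr \<alpha>"
    have "(N1/4) powr \<alpha> / 2 \<le> \<Delta>" using p1 p2 unfolding \<Delta>_def by linarith
    moreover have "0 \<le> \<alpha> * \<Delta>"
    proof -
      have "0 \<le> (N1/4) powr \<alpha> / 2" by simp
      then have "0 \<le> \<Delta>" using \<open>(N1/4) powr \<alpha> / 2 \<le> \<Delta>\<close> by linarith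
      then show ?thesis using \<alpha> by simp
    qed
    moreover have "(\<alpha>+1) * \<bar>t\<bar> powr \<alpha> - (\<alpha>+1) * \<bar>\<xi> - t\<bar> powr \<alpha> = \<Delta> + \<alpha> * \<Delta>"
      unfolding \<Delta>_def by (simp add: algebra_simps)
    ultimately show ?thesis by linarith
  qed
  have i1: "3/(64*N2\<^sup>2) \<le> inverse \<bar>\<xi> - t\<bar> ^ 2 - inverse \<bar>t\<bar> ^ 2"
    by (rule inv_bound) (use d1 d2 half N2 in auto)
  have i2: "inverse \<bar>x\<bar> ^ 2 = inverse x ^ 2" for x :: real by (simp add: power_inverse)
  have p4: "3/(64*N2\<^sup>2) * u\<^sup>2 \<le> u\<^sup>2 * (inverse (\<xi> - t) ^ 2 - inverse t ^ 2)"
    using mult_right_mono[OF i1, of "u\<^sup>2"] by (simp add: i2 mult.commute)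
  show "(N1/4) powr \<alpha> / 2 + 3/(64*N2\<^sup>2) * u\<^sup>2 \<le> (\<alpha>+1) * \<bar>t\<bar> powr \<alpha> - (\<alpha>+1) * \<bar>\<xi> - t\<bar> powr \<alpha> + u\<^sup>2 * (inverse (\<xi> - t) ^ 2 - inverse t ^ 2)"
    using p3 p4 by linarith
qed

lemma phi_mono:
  fixes \<alpha> N1 N2 \<xi> u a b :: real
  assumes \<alpha>: "\<alpha> \<ge> 1" and N2: "N2 > 0" and N12: "32*N2 \<le> N1"
    and \<sigma>: "\<sigma>1 \<in> {-1,1}" "\<sigma>2 \<in> {-1,1}" and ab: "a \<le> b"
    and a: "a \<in> piece N1 N2 \<xi> \<sigma>1 \<sigma>2" and b: "b \<in> piece N1 N2 \<xi> \<sigma>1 \<sigma>2"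
  shows "((N1/4) powr \<alpha> / 2 + 3/(64*N2\<^sup>2) * u\<^sup>2) * (b - a) \<le> phi \<alpha> \<xi> u b - phi \<alpha> \<xi> u a"
proof -
  define D where "D = (N1/4) powr \<alpha> / 2 + 3/(64*N2\<^sup>2) * u\<^sup>2"
  have inP: "x \<in> piece N1 N2 \<xi> \<sigma>1 \<sigma>2" if "a \<le> x" "x \<le> b" for x
    using \<sigma> a b that by (auto simp: piece_def)
  have "(\<lambda>s. phi \<alpha> \<xi> u s - D * s) a \<le> (\<lambda>s. phi \<alpha> \<xi> u s - D * s) b"
  proof (rule DERIV_nonneg_imp_nondecreasing[OF ab])
    fix x assume x: "a \<le> x" "x \<le> b"
    note L = deriv_lower(1,2)[OF \<alpha> N2 N12 \<sigma> inP[OF x]] deriv_lower(3)[OF \<alpha> N2 N12 \<sigma> inP[OF x], of u]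
    have "DERIV (\<lambda>s. phi \<alpha> \<xi> u s - D * s) x :> ((\<alpha>+1) * \<bar>x\<bar> powr \<alpha> - (\<alpha>+1) * \<bar>\<xi> - x\<bar> powr \<alpha> + u\<^sup>2 * (inverse (\<xi> - x) ^ 2 - inverse x ^ 2)) - D * 1"
      by (intro DERIV_diff deriv_phi L(1,2) DERIV_cmult DERIV_ident)
    moreover have "0 \<le> ((\<alpha>+1) * \<bar>x\<bar> powr \<alpha> - (\<alpha>+1) * \<bar>\<xi> - x\<bar> powr \<alpha> + u\<^sup>2 * (inverse (\<xi> - x) ^ 2 - inverse x ^ 2)) - D * 1"
      using L(3) unfolding D_def by simp
    ultimately show "\<exists>y. DERIV (\<lambda>s. phi \<alpha> \<xi> u s - D * s) x :> y \<and> 0 \<le> y" by blast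
  qed
  then show ?thesis unfolding D_def[symmetric] by (simp add: algebra_simps)
qed

lemma omega_identity:
  fixes \<alpha> s \<xi> \<eta> u :: real
  assumes "s \<noteq> 0" "\<xi> - s \<noteq> 0" "\<xi> \<noteq> 0"
  shows "omega \<alpha> s (\<eta> * s / \<xi>+u) + omega \<alpha> (\<xi>-s) (\<eta> - (\<eta> * s / \<xi>+u)) = phi \<alpha> \<xi> u s + \<eta>\<^sup>2/\<xi>"
proof -
  have "(\<eta> * s / \<xi>+u)\<^sup>2 / s + (\<eta> - (\<eta> * s / \<xi>+u))\<^sup>2 / (\<xi>-s) = u\<^sup>2 * (inverse s + inverse (\<xi> - s)) + \<eta>\<^sup>2/\<xi>"
    using assms by (simp add: field_simps power2_eq_square)
  then show ?thesis unfolding omega_def phi_def by simp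
qed

lemma slice_bound:
  fixes \<alpha> N1 N2 \<xi> \<eta> \<tau> u M :: real
  assumes \<alpha>: "\<alpha> \<ge> 1" and N2: "N2 > 0" and N12: "32*N2 \<le> N1" and M: "M \<ge> 0"
  shows "emeasure lborel {s. s \<in> annulus N1 \<and> \<xi> - s \<in> annulus N2 \<and>
            \<bar>\<tau> - omega \<alpha> s (\<eta> * s / \<xi> + u) - omega \<alpha> (\<xi> - s) (\<eta> - (\<eta> * s / \<xi> + u))\<bar> \<le> M}
         \<le> ennreal (16 * M / ((N1/4) powr \<alpha> / 2 + 3/(64*N2\<^sup>2) * u\<^sup>2))"
proof -
  define D where "D = (N1/4) powr \<alpha> / 2 + 3/(64*N2\<^sup>2) * u\<^sup>2"
  have N1: "N1 > 0" using N2 N12 by linarith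
  have Dpos: "D > 0" unfolding D_def using N1 N2
    by (intro add_pos_nonneg) auto
  define S where "S = {s. s \<in> annulus N1 \<and> \<xi> - s \<in> annulus N2 \<and>
            \<bar>\<tau> - omega \<alpha> s (\<eta> * s / \<xi> + u) - omega \<alpha> (\<xi> - s) (\<eta> - (\<eta> * s / \<xi> + u))\<bar> \<le> M}"
  have Sphi: "\<bar>\<tau> - \<eta>\<^sup>2/\<xi> - phi \<alpha> \<xi> u s\<bar> \<le> M" if "s \<in> S" for s
  proof -
    have s1: "N1/4 \<le> \<bar>s\<bar>" and s2: "N2/4 \<le> \<bar>\<xi> - s\<bar>" "\<bar>\<xi> - s\<bar> \<le> 4*N2"
      using that unfolding S_def annulus_def by auto
    have "s \<noteq> 0" "\<xi> - s \<noteq> 0" using s1 s2 N1 N2 by auto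
    moreover have "\<xi> \<noteq> 0" using s1 s2 N12 N1 by auto
    ultimately show ?thesis using that omega_identity[of s \<xi> \<alpha> \<eta> u] unfolding S_def
      by (simp add: algebra_simps)
  qed
  have close: "\<bar>a - b\<bar> \<le> 2*M/D" if \<sigma>: "\<sigma>1 \<in> {-1,1}" "\<sigma>2 \<in> {-1,1}"
    and a: "a \<in> S \<inter> piece N1 N2 \<xi> \<sigma>1 \<sigma>2" and b: "b \<in> S \<inter> piece N1 N2 \<xi> \<sigma>1 \<sigma>2" for a b \<sigma>1 \<sigma>2
  proof -
    have gen: "y - x \<le> 2*M/D" if "x \<le> y" "x \<in> S \<inter> piece N1 N2 \<xi> \<sigma>1 \<sigma>2" "y \<in> S \<inter> piece N1 N2 \<xi> \<sigma>1 \<sigma>2" for x y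
    proof -
      have "D * (y - x) \<le> phi \<alpha> \<xi> u y - phi \<alpha> \<xi> u x"
        unfolding D_def using phi_mono[OF \<alpha> N2 N12 \<sigma> \<open>x \<le> y\<close>, of \<xi> u] that by auto
      also have "\<dots> \<le> 2*M" using Sphi[of x] Sphi[of y] that by auto
      finally show ?thesis using Dpos by (simp add: field_simps)
    qed
    show ?thesis
    proof (cases "a \<le> b")
      case True then show ?thesis using gen[OF True a b] by simp
    next
      case False then show ?thesis using gen[of b a] a b by simp
    qed
  qed
  have ex: "\<exists>I\<in>sets lborel. S \<inter> piece N1 N2 \<xi> \<sigma>1 \<sigma>2 \<subseteq> I \<and> emeasure lborel I \<le> ennreal (2*(2*M/D))"
    if "\<sigma>1 \<in> {-1,1}" "\<sigma>2 \<in> {-1,1}" for \<sigma>1 \<sigma>2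
    by (rule diam_lemma) (use close[OF that] M Dpos in auto)
  obtain I1 where I1: "I1 \<in> sets lborel" "S \<inter> piece N1 N2 \<xi> 1 1 \<subseteq> I1" "emeasure lborel I1 \<le> ennreal (2*(2*M/D))"
    using ex[of 1 1] by auto
  obtain I2 where I2: "I2 \<in> sets lborel" "S \<inter> piece N1 N2 \<xi> 1 (-1) \<subseteq> I2" "emeasure lborel I2 \<le> ennreal (2*(2*M/D))"
    using ex[of 1 "-1"] by auto
  obtain I3 where I3: "I3 \<in> sets lborel" "S \<inter> piece N1 N2 \<xi> (-1) 1 \<subseteq> I3" "emeasure lborel I3 \<le> ennreal (2*(2*M/D))"
    using ex[of "-1" 1] by auto
  obtain I4 where I4: "I4 \<in> sets lborel" "S \<inter> piece N1 N2 \<xi> (-1) (-1) \<subseteq> I4" "emeasure lborel I4 \<le> ennreal (2*(2*M/D))"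
    using ex[of "-1" "-1"] by auto
  have cover: "S \<subseteq> I1 \<union> I2 \<union> I3 \<union> I4"
  proof
    fix s assume s: "s \<in> S"
    then have "s \<in> annulus N1" "\<xi> - s \<in> annulus N2" unfolding S_def by auto
    then have "s \<in> piece N1 N2 \<xi> 1 1 \<or> s \<in> piece N1 N2 \<xi> 1 (-1) \<or> s \<in> piece N1 N2 \<xi> (-1) 1 \<or> s \<in> piece N1 N2 \<xi> (-1) (-1)"
      unfolding annulus_def piece_def by (auto simp: abs_if split: if_splits)
    then show "s \<in> I1 \<union> I2 \<union> I3 \<union> I4" using s I1 I2 I3 I4 by blast
  qed
  have "emeasure lborel S \<le> emeasure lborel (I1 \<union> I2 \<union> I3 \<union> I4)"
    by (rule emeasure_mono[OF cover]) (use I1 I2 I3 I4 in auto)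
  also have "\<dots> \<le> emeasure lborel (I1 \<union> I2 \<union> I3) + emeasure lborel I4"
    by (rule emeasure_subadditive) (use I1 I2 I3 I4 in auto)
  also have "\<dots> \<le> emeasure lborel (I1 \<union> I2) + emeasure lborel I3 + emeasure lborel I4"
    by (intro add_right_mono emeasure_subadditive) (use I1 I2 I3 I4 in auto)
  also have "\<dots> \<le> emeasure lborel I1 + emeasure lborel I2 + emeasure lborel I3 + emeasure lborel I4"
    by (intro add_right_mono emeasure_subadditive) (use I1 I2 I3 I4 in auto)
  also have "\<dots> \<le> ennreal (2*(2*M/D)) + ennreal (2*(2*M/D)) + ennreal (2*(2*M/D)) + ennreal (2*(2*M/D))"
    using I1 I2 I3 I4 by (intro add_mono) auto
  also have "\<dots> = ennreal (16 * M / D)"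
    using M Dpos by (simp flip: ennreal_plus)
  finally show ?thesis unfolding S_def D_def .
qed

lemma omega_meas[measurable]:
  assumes [measurable]: "f \<in> borel_measurable M" "g \<in> borel_measurable M"
  shows "(\<lambda>x. omega \<alpha> (f x) (g x)) \<in> borel_measurable M"
  unfolding omega_def by measurable

lemma annulus_meas[measurable]:
  assumes [measurable]: "f \<in> borel_measurable M"
  shows "Measurable.pred M (\<lambda>x. f x \<in> annulus N)"
  unfolding annulus_def mem_Collect_eq by measurable

lemma F_bound:
  fixes \<alpha> N1 N2 \<xi> \<eta> \<tau> M :: real
  assumes \<alpha>: "\<alpha> \<ge> 1" and N2: "N2 > 0" and N12: "32*N2 \<le> N1" and M: "M \<ge> 0"
  shows "emeasure lborel {p :: real \<times> real. fst p \<in> annulus N1 \<and> \<xi> - fst p \<in> annulus N2 \<and>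
            \<bar>\<tau> - omega \<alpha> (fst p) (snd p) - omega \<alpha> (\<xi> - fst p) (\<eta> - snd p)\<bar> \<le> M}
         \<le> ennreal (16 * M * (pi / sqrt (((N1/4) powr \<alpha> / 2) * (3/(64*N2\<^sup>2)))))"
proof -
  define A where "A = (N1/4) powr \<alpha> / 2"
  define B where "B = 3/(64*N2\<^sup>2)"
  have N1: "N1 > 0" using N2 N12 by linarith
  have A: "A > 0" unfolding A_def using N1 by simp
  have B: "B > 0" unfolding B_def using N2 by simp
  define P where "P x y = (x \<in> annulus N1 \<and> \<xi> - x \<in> annulus N2 \<and>
            \<bar>\<tau> - omega \<alpha> x y - omega \<alpha> (\<xi> - x) (\<eta> - y)\<bar> \<le> M)" for x y
  define h where "h x y = (indicator {p. P (fst p) (snd p)} (x, y) :: ennreal)" for x y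
  have Pm[measurable]: "{p :: real \<times> real. P (fst p) (snd p)} \<in> sets borel"
  proof -
    have "{p \<in> space (borel \<Otimes>\<^sub>M borel). P (fst p) (snd p)} \<in> sets (borel \<Otimes>\<^sub>M borel)"
      unfolding P_def by measurable
    then show ?thesis by (simp add: space_pair_measure) (metis borel_prod)
  qed
  have hm[measurable]: "case_prod h \<in> borel_measurable borel"
    unfolding h_def borel_prod[symmetric] by measurable
  have "emeasure lborel {p :: real \<times> real. P (fst p) (snd p)} = (\<integral>\<^sup>+p. indicator {p. P (fst p) (snd p)} p \<partial>lborel)"
    using Pm by simp
  also have "\<dots> = (\<integral>\<^sup>+x. \<integral>\<^sup>+y. h x y \<partial>lborel \<partial>lborel)"
    unfolding h_def lborel_prod[symmetric]
    by (subst lborel.nn_integral_fst[symmetric]) (auto simp: lborel_prod)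
  also have "\<dots> = (\<integral>\<^sup>+x. \<integral>\<^sup>+u. h x (\<eta> * x / \<xi> + u) \<partial>lborel \<partial>lborel)"
  proof -
    have eq: "(\<integral>\<^sup>+y. h x y \<partial>lborel) = (\<integral>\<^sup>+u. h x (\<eta> * x / \<xi> + u) \<partial>lborel)" for x
    proof -
      have "h x = indicator {y. P x y}" unfolding h_def by (auto simp: indicator_def fun_eq_iff)
      moreover have "{y. P x y} \<in> sets borel" unfolding P_def by measurable
      ultimately have "h x \<in> borel_measurable borel" by simp
      then show ?thesis using nn_integral_real_affine[of "h x" 1 "\<eta> * x / \<xi>"] by simp
    qed
    show ?thesis by (intro nn_integral_cong eq)
  qed
  also have "\<dots> = (\<integral>\<^sup>+u. \<integral>\<^sup>+x. h x (\<eta> * x / \<xi> + u) \<partial>lborel \<partial>lborel)"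
  proof (rule lborel_pair.Fubini'[symmetric])
    have g: "(\<lambda>z::real\<times>real. (fst z, (\<eta> / \<xi>) * fst z + snd z)) \<in> borel_measurable borel"
      by (intro borel_measurable_continuous_onI continuous_intros)
    have "(\<lambda>z. case_prod h ((\<lambda>z::real\<times>real. (fst z, (\<eta> / \<xi>) * fst z + snd z)) z)) \<in> borel_measurable borel"
      by (rule measurable_compose[OF g hm])
    then show "(\<lambda>(x, u). h x (\<eta> * x / \<xi> + u)) \<in> borel_measurable (lborel \<Otimes>\<^sub>M lborel)"
    proof -
      note that = \<open>(\<lambda>z. case_prod h ((\<lambda>z::real\<times>real. (fst z, (\<eta> / \<xi>) * fst z + snd z)) z)) \<in> borel_measurable borel\<close>
      have eqf: "(\<lambda>(x, u). h x (\<eta> * x / \<xi> + u)) = (\<lambda>z. case_prod h ((\<lambda>z::real\<times>real. (fst z, (\<eta> / \<xi>) * fst z + snd z)) z))"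
        by (simp add: fun_eq_iff)
      show ?thesis unfolding eqf lborel_prod measurable_lborel2 by (rule that)
    qed
  qed
  also have "\<dots> \<le> (\<integral>\<^sup>+u. ennreal (16 * M) * ennreal (1 / (A + B * u\<^sup>2)) \<partial>lborel)"
  proof (intro nn_integral_mono)
    fix u :: real
    have "(\<integral>\<^sup>+x. h x (\<eta> * x / \<xi> + u) \<partial>lborel) = emeasure lborel {s. P s (\<eta> * s / \<xi> + u)}"
    proof -
      have "{s. P s (\<eta> * s / \<xi> + u)} \<in> sets borel" unfolding P_def by measurable
      moreover have "(\<lambda>x. h x (\<eta> * x / \<xi> + u)) = indicator {s. P s (\<eta> * s / \<xi> + u)}"
        unfolding h_def by (rule ext) (simp only: indicator_def mem_Collect_eq fst_conv snd_conv)
      ultimately show ?thesis by (simp only: nn_integral_indicator sets_lborel)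
    qed
    also have "\<dots> \<le> ennreal (16 * M / (A + B * u\<^sup>2))"
    proof -
      have "{s. P s (\<eta> * s / \<xi> + u)} = {s. s \<in> annulus N1 \<and> \<xi> - s \<in> annulus N2 \<and>
            \<bar>\<tau> - omega \<alpha> s (\<eta> * s / \<xi> + u) - omega \<alpha> (\<xi> - s) (\<eta> - (\<eta> * s / \<xi> + u))\<bar> \<le> M}"
        by (simp only: P_def)
      then show ?thesis unfolding A_def B_def by (simp only: slice_bound[OF \<alpha> N2 N12 M])
    qed
    also have "\<dots> = ennreal (16 * M) * ennreal (1 / (A + B * u\<^sup>2))"
    proof -
      have "A + B * u\<^sup>2 > 0" using A B by (simp add: add_pos_nonneg)
      then have nn: "0 \<le> 1 / (A + B * u\<^sup>2)" by simp
      show ?thesis using ennreal_mult[OF _ nn, of "16*M"] M by simp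
    qed
    finally show "(\<integral>\<^sup>+x. h x (\<eta> * x / \<xi> + u) \<partial>lborel) \<le> ennreal (16 * M) * ennreal (1 / (A + B * u\<^sup>2))" .
  qed
  also have "\<dots> = ennreal (16 * M) * (\<integral>\<^sup>+u. ennreal (1 / (A + B * u\<^sup>2)) \<partial>lborel)"
    by (rule nn_integral_cmult) measurable
  also have "\<dots> \<le> ennreal (16 * M) * ennreal (pi / sqrt (A*B))"
    by (intro mult_left_mono arctan_int A B) auto
  also have "\<dots> = ennreal (16 * M * (pi / sqrt (A*B)))"
  proof -
    have "0 \<le> pi / sqrt (A*B)" using A B by simp
    then show ?thesis using ennreal_mult[of "16*M" "pi / sqrt (A*B)"] M by simp
  qed
  finally show ?thesis unfolding P_def A_def B_def .
qed

lemma Dset_iff: "(t, a, b) \<in> Dset \<alpha> N L \<longleftrightarrow> a \<in> annulus N \<and> \<bar>t - omega \<alpha> a b\<bar> \<le> L"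
  unfolding Dset_def by simp

lemma Dset_meas: "Dset \<alpha> N L \<in> sets (borel \<Otimes>\<^sub>M (borel \<Otimes>\<^sub>M borel))"
proof -
  have "Measurable.pred (borel \<Otimes>\<^sub>M (borel \<Otimes>\<^sub>M borel)) (\<lambda>y::real\<times>real\<times>real. fst (snd y) \<in> annulus N \<and> \<bar>fst y - omega \<alpha> (fst (snd y)) (snd (snd y))\<bar> \<le> L)"
    by measurable
  moreover have "{y \<in> space (borel \<Otimes>\<^sub>M (borel \<Otimes>\<^sub>M borel)). fst (snd y) \<in> annulus N \<and> \<bar>fst y - omega \<alpha> (fst (snd y)) (snd (snd y))\<bar> \<le> L} = Dset \<alpha> N L"
    unfolding Dset_def space_pair_measure by auto
  ultimately show ?thesis unfolding Measurable.pred_def by simp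
qed

lemma Gx_meas:
  fixes x :: "real \<times> real \<times> real"
  shows "{y. y \<in> Dset \<alpha> N1 L1 \<and> x - y \<in> Dset \<alpha> N2 L2} \<in> sets lborel"
proof -
  have D1: "Dset \<alpha> N1 L1 \<in> sets borel" using Dset_meas by (simp only: borel_prod)
  have D2: "Dset \<alpha> N2 L2 \<in> sets borel" using Dset_meas by (simp only: borel_prod)
  have cm: "(\<lambda>y::real\<times>real\<times>real. x - y) \<in> borel_measurable borel"
    by (intro borel_measurable_continuous_onI continuous_intros)
  have "(\<lambda>y. x - y) -` Dset \<alpha> N2 L2 \<inter> space borel \<in> sets borel"
    by (rule measurable_sets[OF cm D2])
  moreover have "{y. y \<in> Dset \<alpha> N1 L1 \<and> x - y \<in> Dset \<alpha> N2 L2} = Dset \<alpha> N1 L1 \<inter> ((\<lambda>y. x - y) -` Dset \<alpha> N2 L2 \<inter> space borel)"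
    by auto
  ultimately show ?thesis using D1 by simp
qed

lemma E_bound:
  fixes \<alpha> N1 N2 L1 L2 :: real and x :: "real \<times> real \<times> real"
  assumes \<alpha>: "\<alpha> \<ge> 1" and N2: "N2 > 0" and N12: "32*N2 \<le> N1" and L1: "L1 \<ge> 0" and L2: "L2 \<ge> 0"
  shows "emeasure lborel {y. y \<in> Dset \<alpha> N1 L1 \<and> x - y \<in> Dset \<alpha> N2 L2}
     \<le> ennreal (2 * min L1 L2) * ennreal (16 * (L1 + L2) * (pi / sqrt (((N1/4) powr \<alpha> / 2) * (3/(64*N2\<^sup>2)))))"
proof -
  obtain \<tau> \<xi> \<eta> where x: "x = (\<tau>, \<xi>, \<eta>)" by (cases x) auto
  define Fs where "Fs = {p :: real \<times> real. fst p \<in> annulus N1 \<and> \<xi> - fst p \<in> annulus N2 \<and>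
            \<bar>\<tau> - omega \<alpha> (fst p) (snd p) - omega \<alpha> (\<xi> - fst p) (\<eta> - snd p)\<bar> \<le> L1 + L2}"
  define Gx where "Gx = {y. y \<in> Dset \<alpha> N1 L1 \<and> x - y \<in> Dset \<alpha> N2 L2}"
  have Fsm: "Fs \<in> sets borel"
  proof -
    have "{p \<in> space (borel \<Otimes>\<^sub>M borel). fst p \<in> annulus N1 \<and> \<xi> - fst p \<in> annulus N2 \<and>
            \<bar>\<tau> - omega \<alpha> (fst p) (snd p) - omega \<alpha> (\<xi> - fst p) (\<eta> - snd p)\<bar> \<le> L1 + L2} \<in> sets (borel \<Otimes>\<^sub>M borel)"
      by measurable
    moreover have "{p \<in> space (borel \<Otimes>\<^sub>M borel). fst p \<in> annulus N1 \<and> \<xi> - fst p \<in> annulus N2 \<and>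
            \<bar>\<tau> - omega \<alpha> (fst p) (snd p) - omega \<alpha> (\<xi> - fst p) (\<eta> - snd p)\<bar> \<le> L1 + L2} = Fs"
      unfolding Fs_def space_pair_measure by simp
    ultimately show ?thesis by (simp only: borel_prod)
  qed
  have Gxm: "Gx \<in> sets (lborel \<Otimes>\<^sub>M lborel)"
  proof -
    have D1: "Dset \<alpha> N1 L1 \<in> sets borel" using Dset_meas by (simp only: borel_prod)
    have D2: "Dset \<alpha> N2 L2 \<in> sets borel" using Dset_meas by (simp only: borel_prod)
    have cm: "(\<lambda>y::real\<times>real\<times>real. x - y) \<in> borel_measurable borel"
      by (intro borel_measurable_continuous_onI continuous_intros)
    have "(\<lambda>y. x - y) -` Dset \<alpha> N2 L2 \<inter> space borel \<in> sets borel"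
      by (rule measurable_sets[OF cm D2])
    then have "Gx = Dset \<alpha> N1 L1 \<inter> ((\<lambda>y. x - y) -` Dset \<alpha> N2 L2 \<inter> space borel)" 
      "(\<lambda>y. x - y) -` Dset \<alpha> N2 L2 \<inter> space borel \<in> sets borel"
      unfolding Gx_def by auto
    then have "Gx \<in> sets borel" using D1 by simp
    then show ?thesis by (simp only: lborel_prod sets_lborel)
  qed
  have slice: "emeasure lborel ((\<lambda>t. (t, p)) -` Gx) \<le> ennreal (2 * min L1 L2) * indicator Fs p" for p :: "real \<times> real"
  proof -
    obtain a b where p: "p = (a, b)" by (cases p) auto
    have mem: "(t, p) \<in> Gx \<longleftrightarrow> a \<in> annulus N1 \<and> \<bar>t - omega \<alpha> a b\<bar> \<le> L1 \<and> \<xi> - a \<in> annulus N2 \<and> \<bar>(\<tau> - t) - omega \<alpha> (\<xi> - a) (\<eta> - b)\<bar> \<le> L2" for t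
      unfolding Gx_def x p by (simp add: Dset_iff)
    show ?thesis
    proof (cases "p \<in> Fs")
      case False
      have "(\<lambda>t. (t, p)) -` Gx = {}"
      proof (rule ccontr)
        assume "(\<lambda>t. (t, p)) -` Gx \<noteq> {}"
        then obtain t where "(t, p) \<in> Gx" by auto
        then have "a \<in> annulus N1" "\<xi> - a \<in> annulus N2" "\<bar>\<tau> - omega \<alpha> a b - omega \<alpha> (\<xi> - a) (\<eta> - b)\<bar> \<le> L1 + L2"
          unfolding mem by auto
        then have "p \<in> Fs" unfolding Fs_def p by simp
        then show False using False by simp
      qed
      then show ?thesis by simp
    next
      case True
      have s1: "(\<lambda>t. (t, p)) -` Gx \<subseteq> {omega \<alpha> a b - L1 .. omega \<alpha> a b + L1}"
        using mem by (auto simp: abs_le_iff)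
      have s2: "(\<lambda>t. (t, p)) -` Gx \<subseteq> {\<tau> - omega \<alpha> (\<xi> - a) (\<eta> - b) - L2 .. \<tau> - omega \<alpha> (\<xi> - a) (\<eta> - b) + L2}"
        using mem by (auto simp: abs_le_iff)
      have "emeasure lborel ((\<lambda>t. (t, p)) -` Gx) \<le> ennreal (2 * L1)"
        using emeasure_mono[OF s1, of lborel] L1 by simp
      moreover have "emeasure lborel ((\<lambda>t. (t, p)) -` Gx) \<le> ennreal (2 * L2)"
        using emeasure_mono[OF s2, of lborel] L2 by simp
      ultimately have "emeasure lborel ((\<lambda>t. (t, p)) -` Gx) \<le> ennreal (2 * min L1 L2)"
        by (cases "L1 \<le> L2") (auto simp: min_def)
      then show ?thesis using True by simp
    qed
  qed
  have "emeasure lborel Gx = emeasure (lborel \<Otimes>\<^sub>M lborel) Gx" by (simp only: lborel_prod)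
  also have "\<dots> = (\<integral>\<^sup>+p. emeasure lborel ((\<lambda>t. (t, p)) -` Gx) \<partial>lborel)"
    by (rule lborel_pair.emeasure_pair_measure_alt2[OF Gxm])
  also have "\<dots> \<le> (\<integral>\<^sup>+p. ennreal (2 * min L1 L2) * indicator Fs p \<partial>lborel)"
    by (intro nn_integral_mono slice)
  also have "\<dots> = ennreal (2 * min L1 L2) * emeasure lborel Fs"
    by (rule nn_integral_cmult_indicator) (use Fsm in simp)
  also have "\<dots> \<le> ennreal (2 * min L1 L2) * ennreal (16 * (L1 + L2) * (pi / sqrt (((N1/4) powr \<alpha> / 2) * (3/(64*N2\<^sup>2)))))"
    unfolding Fs_def by (intro mult_left_mono F_bound[OF \<alpha> N2 N12]) (use L1 L2 in auto)
  finally show ?thesis unfolding Gx_def .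
qed

lemma const_bound:
  fixes \<alpha> N1 N2 L1 L2 :: real
  assumes N1: "N1 > 0" and N2: "N2 > 0" and L1: "L1 \<ge> 0" and L2: "L2 \<ge> 0"
  shows "2 * min L1 L2 * (16 * (L1 + L2) * (pi / sqrt (((N1/4) powr \<alpha> / 2) * (3/(64*N2\<^sup>2)))))
     \<le> (64 * pi * 2 powr \<alpha> / sqrt (3/128)) * N2 / N1 powr (\<alpha> / 2) * L1 * L2"
proof -
  have q: "sqrt ((N1/4) powr \<alpha>) = N1 powr (\<alpha>/2) / 2 powr \<alpha>"
  proof -
    have "sqrt ((N1/4) powr \<alpha>) = ((N1/4) powr \<alpha>) powr (1/2)" by (simp add: powr_half_sqrt)
    also have "\<dots> = (N1/4) powr (\<alpha>/2)" by (simp add: powr_powr)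
    also have "\<dots> = N1 powr (\<alpha>/2) / 4 powr (\<alpha>/2)" using N1 by (simp add: powr_divide)
    also have "4 powr (\<alpha>/2) = 2 powr \<alpha>"
    proof -
      have "(4::real) = 2 powr 2" by simp
      then have "(4::real) powr (\<alpha>/2) = (2 powr 2) powr (\<alpha>/2)" by simp
      also have "\<dots> = 2 powr \<alpha>" by (simp add: powr_powr)
      finally show ?thesis .
    qed
    finally show ?thesis .
  qed
  have s: "sqrt (((N1/4) powr \<alpha> / 2) * (3/(64*N2\<^sup>2))) = sqrt ((N1/4) powr \<alpha>) * sqrt (3/128) / N2"
  proof -
    have "((N1/4) powr \<alpha> / 2) * (3/(64*N2\<^sup>2)) = (N1/4) powr \<alpha> * (3/128) / N2\<^sup>2" by simp
    then show ?thesis using N2 by (simp add: real_sqrt_mult real_sqrt_divide)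
  qed
  have e: "pi / sqrt (((N1/4) powr \<alpha> / 2) * (3/(64*N2\<^sup>2))) = pi * 2 powr \<alpha> / sqrt (3/128) * N2 / N1 powr (\<alpha> / 2)"
    unfolding s q using N1 N2 by (simp add: field_simps)
  have m: "2 * min L1 L2 * (16 * (L1 + L2)) \<le> 64 * L1 * L2"
  proof (cases "L1 \<le> L2")
    case True
    then have "L1 * L1 \<le> L1 * L2" using L1 by (intro mult_left_mono) auto
    then show ?thesis using True by (simp add: min_def algebra_simps)
  next
    case False
    then have "L2 * L2 \<le> L1 * L2" using L2 by (intro mult_right_mono) auto
    then show ?thesis using False by (simp add: min_def algebra_simps)
  qed
  have pos: "0 \<le> pi * 2 powr \<alpha> / sqrt (3/128) * N2 / N1 powr (\<alpha> / 2)" using N1 N2 by simp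
  have "2 * min L1 L2 * (16 * (L1 + L2) * (pi / sqrt (((N1/4) powr \<alpha> / 2) * (3/(64*N2\<^sup>2)))))
      = (2 * min L1 L2 * (16 * (L1 + L2))) * (pi * 2 powr \<alpha> / sqrt (3/128) * N2 / N1 powr (\<alpha> / 2))"
    unfolding e by (simp add: algebra_simps)
  also have "\<dots> \<le> (64 * L1 * L2) * (pi * 2 powr \<alpha> / sqrt (3/128) * N2 / N1 powr (\<alpha> / 2))"
    by (rule mult_right_mono[OF m pos])
  also have "\<dots> = (64 * pi * 2 powr \<alpha> / sqrt (3/128)) * N2 / N1 powr (\<alpha> / 2) * L1 * L2"
    by (simp add: algebra_simps)
  finally show ?thesis .
qed

theorem lemma4p4:
  fixes \<alpha> :: real
  assumes "\<alpha> \<ge> 1"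
  shows "\<exists>K>0. \<exists>C>0. \<forall>(N1::real) (N2::real) (L1::real) (L2::real)
            (f1 :: real \<times> real \<times> real \<Rightarrow> real) (f2 :: real \<times> real \<times> real \<Rightarrow> real).
     (\<exists>k::nat. N1 = 2 ^ k) \<and> (\<exists>k::int. N2 = 2 powr k) \<and> N1 \<ge> K * N2 \<and>
     (\<exists>k::nat. L1 = 2 ^ k) \<and> (\<exists>k::nat. L2 = 2 ^ k) \<and>
     f1 \<in> borel_measurable lborel \<and> f2 \<in> borel_measurable lborel \<and>
     (\<forall>x. f1 x \<ge> 0) \<and> (\<forall>x. f2 x \<ge> 0) \<and>
     {x. f1 x \<noteq> 0} \<subseteq> Dset \<alpha> N1 L1 \<and> {x. f2 x \<noteq> 0} \<subseteq> Dset \<alpha> N2 L2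
     \<longrightarrow> (\<integral>\<^sup>+ x. (conv3 f1 f2 x)\<^sup>2 \<partial>lborel)
          \<le> ennreal (C\<^sup>2 * N2 / N1 powr (\<alpha> / 2) * L1 * L2) * L2sq f1 * L2sq f2"
proof -
  define Cst where "Cst = 64 * pi * 2 powr \<alpha> / sqrt (3/128)"
  have Cpos: "Cst > 0" unfolding Cst_def by simp
  have sq: "(sqrt Cst)\<^sup>2 = Cst" using Cpos by simp
  have main: "(\<integral>\<^sup>+ x. (conv3 f1 f2 x)\<^sup>2 \<partial>lborel)
          \<le> ennreal ((sqrt Cst)\<^sup>2 * N2 / N1 powr (\<alpha> / 2) * L1 * L2) * L2sq f1 * L2sq f2"
    if h: "(\<exists>k::nat. N1 = 2 ^ k) \<and> (\<exists>k::int. N2 = 2 powr k) \<and> N1 \<ge> 32 * N2 \<and>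
     (\<exists>k::nat. L1 = 2 ^ k) \<and> (\<exists>k::nat. L2 = 2 ^ k) \<and>
     f1 \<in> borel_measurable lborel \<and> f2 \<in> borel_measurable lborel \<and>
     (\<forall>x. f1 x \<ge> 0) \<and> (\<forall>x. f2 x \<ge> 0) \<and>
     {x. f1 x \<noteq> 0} \<subseteq> Dset \<alpha> N1 L1 \<and> {x. f2 x \<noteq> 0} \<subseteq> Dset \<alpha> N2 L2"
    for N1 N2 L1 L2 :: real and f1 f2 :: "real \<times> real \<times> real \<Rightarrow> real"
  proof -
    have N1: "N1 > 0" using h by auto
    have N2: "N2 > 0" using h by auto
    have L1: "L1 \<ge> 0" using h by auto
    have L2: "L2 \<ge> 0" using h by auto
    have N12: "32 * N2 \<le> N1" using h by auto
    show ?thesis unfolding sq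
    proof (rule conv_CS)
      show "f1 \<in> borel_measurable lborel" "f2 \<in> borel_measurable lborel"
        "\<And>x. f1 x \<ge> 0" "\<And>x. f2 x \<ge> 0" using h by auto
      fix x :: "real \<times> real \<times> real"
      have "emeasure lborel {y. f1 y \<noteq> 0 \<and> f2 (x - y) \<noteq> 0} \<le> emeasure lborel {y. y \<in> Dset \<alpha> N1 L1 \<and> x - y \<in> Dset \<alpha> N2 L2}"
        by (rule emeasure_mono[OF _ Gx_meas]) (use h in auto)
      also have "\<dots> \<le> ennreal (2 * min L1 L2) * ennreal (16 * (L1 + L2) * (pi / sqrt (((N1/4) powr \<alpha> / 2) * (3/(64*N2\<^sup>2)))))"
        by (rule E_bound[OF assms N2 N12 L1 L2])
      also have "\<dots> = ennreal (2 * min L1 L2 * (16 * (L1 + L2) * (pi / sqrt (((N1/4) powr \<alpha> / 2) * (3/(64*N2\<^sup>2))))))"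
        by (rule ennreal_mult[symmetric]) (use L1 L2 in auto)
      also have "\<dots> \<le> ennreal (Cst * N2 / N1 powr (\<alpha> / 2) * L1 * L2)"
        unfolding Cst_def by (intro ennreal_leI const_bound N1 N2 L1 L2)
      finally show "emeasure lborel {y. f1 y \<noteq> 0 \<and> f2 (x - y) \<noteq> 0} \<le> ennreal (Cst * N2 / N1 powr (\<alpha> / 2) * L1 * L2)" .
    qed
  qed
  show ?thesis
    by (intro exI[of _ "32::real"] conjI exI[of _ "sqrt Cst"] allI impI main)
       (use Cpos in auto)
qed

end
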